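(* Let $G$ be a finite graph and let $k$ be an integer with $k>\chi(G)+1$. Then $G$ is determined up to isomorphism by the Kempe-recolouring graph $\mathcal{K}_k(G)$, even without knowing the value of $k$: if $G'$ is another finite graph and $k'>\chi(G')+1$ is an integer with $\mathcal{K}_k(G)\cong\mathcal{K}_{k'}(G')$, then $G\cong G'$.
   Context: All graphs are finite and simple. A $k$-colouring of $G$ is a map $c:V(G)\to\{1,\dots,k\}$ with $c(u)\neq c(v)$ for every edge $uv$. Given a $k$-colouring $c$, two distinct colours $i,j$, and a connected component $H$ of the subgraph of $G$ induced by $c^{-1}(\{i,j\})$, the Kempe swap on $H$ produces the colouring obtained from $c$ by exchanging colours $i$ and $j$ on the vertices of $H$. The $k$-Kempe-recolouring graph $\mathcal{K}_k(G)$ has as vertices all $k$-colourings of $G$, two distinct colourings being adjacent if and only if one is obtained from the other by a single Kempe swap. (Recolouring a single vertex to a colour absent from its neighbourhood is a special case, a trivial Kempe swap.) *)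

theory Defs
  imports Main
begin

definition simple_graph :: "'a set \<Rightarrow> ('a \<times> 'a) set \<Rightarrow> bool" where
  "simple_graph V E \<longleftrightarrow> finite V \<and> E \<subseteq> V \<times> V \<and> sym E \<and> (\<forall>v. (v, v) \<notin> E)"

definition graph_iso :: "'a set \<Rightarrow> ('a \<times> 'a) set \<Rightarrow> 'b set \<Rightarrow> ('b \<times> 'b) set \<Rightarrow> bool" where
  "graph_iso V E V' E' \<longleftrightarrow>
     (\<exists>f. bij_betw f V V' \<and> (\<forall>u\<in>V. \<forall>v\<in>V. (u, v) \<in> E \<longleftrightarrow> (f u, f v) \<in> E'))"

text \<open>k-colourings, colours 1..k; outside V the map is fixed to 0 so that
colourings are in bijection with maps V \<rightarrow> {1..k}.\<close>
definition colourings :: "'a set \<Rightarrow> ('a \<times> 'a) set \<Rightarrow> nat \<Rightarrow> ('a \<Rightarrow> nat) set" where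
  "colourings V E k = {c. (\<forall>v\<in>V. c v \<in> {1..k}) \<and> (\<forall>v. v \<notin> V \<longrightarrow> c v = 0)
                          \<and> (\<forall>(u, v)\<in>E. c u \<noteq> c v)}"

definition chromatic_number :: "'a set \<Rightarrow> ('a \<times> 'a) set \<Rightarrow> nat" where
  "chromatic_number V E = (LEAST k. colourings V E k \<noteq> {})"

definition kempe_component :: "'a set \<Rightarrow> ('a \<times> 'a) set \<Rightarrow> ('a \<Rightarrow> nat) \<Rightarrow> nat \<Rightarrow> nat \<Rightarrow> 'a set \<Rightarrow> bool" where
  "kempe_component V E c i j H \<longleftrightarrow>
     (let S = {v\<in>V. c v = i \<or> c v = j} in
        \<exists>u\<in>S. H = {v\<in>S. (u, v) \<in> (E \<inter> (S \<times> S))\<^sup>*})"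

definition kempe_swap :: "('a \<Rightarrow> nat) \<Rightarrow> nat \<Rightarrow> nat \<Rightarrow> 'a set \<Rightarrow> 'a \<Rightarrow> nat" where
  "kempe_swap c i j H = (\<lambda>v. if v \<in> H then (if c v = i then j else if c v = j then i else c v) else c v)"

definition kempe_edges :: "'a set \<Rightarrow> ('a \<times> 'a) set \<Rightarrow> nat \<Rightarrow> (('a \<Rightarrow> nat) \<times> ('a \<Rightarrow> nat)) set" where
  "kempe_edges V E k = {(c, d). c \<in> colourings V E k \<and> d \<in> colourings V E k \<and> c \<noteq> d \<and>
      (\<exists>i\<in>{1..k}. \<exists>j\<in>{1..k}. \<exists>H. i \<noteq> j \<and> kempe_component V E c i j H \<and> d = kempe_swap c i j H)}"

end

theory Submission
  imports Defs
begin


definition Dset :: "('a \<Rightarrow> nat) \<Rightarrow> ('a \<Rightarrow> nat) \<Rightarrow> 'a set" where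
  "Dset x y = {w. x w \<noteq> y w}"

definition conn :: "('a \<times> 'a) set \<Rightarrow> 'a set \<Rightarrow> bool" where
  "conn E D \<longleftrightarrow> (\<forall>P a b. a \<in> D \<longrightarrow> b \<in> D \<longrightarrow> P a \<longrightarrow> \<not> P b \<longrightarrow>
      (\<exists>p q. p \<in> D \<and> q \<in> D \<and> (p, q) \<in> E \<and> P p \<and> \<not> P q))"

definition kedge :: "'a set \<Rightarrow> ('a \<times> 'a) set \<Rightarrow> ('a \<Rightarrow> nat) \<Rightarrow> ('a \<Rightarrow> nat) \<Rightarrow> nat \<Rightarrow> nat \<Rightarrow> bool" where
  "kedge V E x y i j \<longleftrightarrow> i \<noteq> j \<and>
     (\<forall>w\<in>Dset x y. (x w = i \<and> y w = j) \<or> (x w = j \<and> y w = i)) \<and>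
     conn E (Dset x y) \<and>
     (\<forall>w\<in>Dset x y. \<forall>z\<in>V. (w, z) \<in> E \<longrightarrow> (x z = i \<or> x z = j) \<longrightarrow> z \<in> Dset x y)"

lemma Dset_sym: "Dset x y = Dset y x"
  unfolding Dset_def by auto

lemma conn_sym_help:
  assumes symE: "sym E" and R: "(u, t) \<in> (E \<inter> S \<times> S)\<^sup>*"
    and H: "\<And>v. (u, v) \<in> (E \<inter> S \<times> S)\<^sup>* \<Longrightarrow> v \<in> S \<Longrightarrow> v \<in> H" and uS: "u \<in> S"
    and P: "P u \<noteq> P t"
  shows "\<exists>p q. p \<in> H \<and> q \<in> H \<and> (p, q) \<in> E \<and> P p \<and> \<not> P q"
  using R P
proof (induction rule: rtrancl_induct)
  case base
  then show ?case by simp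
next
  case (step s t)
  show ?case
  proof (cases "P u = P s")
    case False
    then show ?thesis using step.IH by blast
  next
    case True
    have st: "(s, t) \<in> E" "s \<in> S" "t \<in> S" using step.hyps(2) by auto
    have "s \<in> H" using H[OF step.hyps(1)] st(2) .
    moreover have "(u, t) \<in> (E \<inter> S \<times> S)\<^sup>*" using rtrancl_into_rtrancl[OF step.hyps(1) step.hyps(2)] .
    then have "t \<in> H" using H st(3) by blast
    moreover have "(t, s) \<in> E" using symE st(1) by (rule symD)
    moreover have "P s \<noteq> P t" using True step.prems by simp
    ultimately show ?thesis using st(1)
    proof (cases "P s")
      case True
      then show ?thesis using \<open>s \<in> H\<close> \<open>t \<in> H\<close> st(1) \<open>P s \<noteq> P t\<close> by auto
    next
      case False
      then show ?thesis using \<open>s \<in> H\<close> \<open>t \<in> H\<close> \<open>(t, s) \<in> E\<close> \<open>P s \<noteq> P t\<close> by auto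
    qed
  qed
qed

lemma kedge_of_kempe:
  assumes G: "simple_graph V E" and xy: "(x, y) \<in> kempe_edges V E k"
  shows "\<exists>i j. kedge V E x y i j"
proof -
  obtain i j H where ij: "i \<noteq> j" and comp: "kempe_component V E x i j H"
    and yd: "y = kempe_swap x i j H"
    using xy unfolding kempe_edges_def by auto
  define S where "S = {v\<in>V. x v = i \<or> x v = j}"
  obtain u where uS: "u \<in> S" and Hd: "H = {v\<in>S. (u, v) \<in> (E \<inter> (S \<times> S))\<^sup>*}"
    using comp unfolding kempe_component_def S_def Let_def by blast
  have symE: "sym E" using G unfolding simple_graph_def by auto
  have HS: "H \<subseteq> S" using Hd by auto
  have DH: "Dset x y = H"
    using HS ij unfolding Dset_def yd kempe_swap_def S_def by auto
  have c1: "\<forall>w\<in>Dset x y. (x w = i \<and> y w = j) \<or> (x w = j \<and> y w = i)"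
    using DH HS unfolding yd kempe_swap_def S_def by auto
  have c2: "conn E (Dset x y)"
    unfolding conn_def
  proof (intro allI impI)
    fix P a b assume a: "a \<in> Dset x y" and b: "b \<in> Dset x y" and Pa: "P a" and Pb: "\<not> P b"
    have Hm: "\<And>v. (u, v) \<in> (E \<inter> S \<times> S)\<^sup>* \<Longrightarrow> v \<in> S \<Longrightarrow> v \<in> H" using Hd by auto
    show "\<exists>p q. p \<in> Dset x y \<and> q \<in> Dset x y \<and> (p, q) \<in> E \<and> P p \<and> \<not> P q"
    proof (cases "P u")
      case True
      have "(u, b) \<in> (E \<inter> S \<times> S)\<^sup>*" using b DH Hd by auto
      from conn_sym_help[OF symE this Hm uS] True Pb DH show ?thesis by auto
    next
      case False
      have "(u, a) \<in> (E \<inter> S \<times> S)\<^sup>*" using a DH Hd by auto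
      from conn_sym_help[OF symE this Hm uS] False Pa DH show ?thesis by auto
    qed
  qed
  have c3: "\<forall>w\<in>Dset x y. \<forall>z\<in>V. (w, z) \<in> E \<longrightarrow> (x z = i \<or> x z = j) \<longrightarrow> z \<in> Dset x y"
  proof (intro ballI impI)
    fix w z assume w: "w \<in> Dset x y" and z: "z \<in> V" and wz: "(w, z) \<in> E" and xz: "x z = i \<or> x z = j"
    have zS: "z \<in> S" using z xz S_def by auto
    have "w \<in> S" "(u, w) \<in> (E \<inter> S \<times> S)\<^sup>*" using w DH Hd by auto
    moreover have "(w, z) \<in> E \<inter> S \<times> S" using wz zS \<open>w \<in> S\<close> by blast
    ultimately have "(u, z) \<in> (E \<inter> S \<times> S)\<^sup>*" by (meson rtrancl_into_rtrancl)
    then show "z \<in> Dset x y" using DH Hd zS by auto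
  qed
  show ?thesis using ij c1 c2 c3 unfolding kedge_def by blast
qed

lemma kedge_sym:
  assumes K: "kedge V E x y i j"
  shows "kedge V E y x i j"
proof -
  have D: "Dset y x = Dset x y" by (rule Dset_sym)
  have ij: "i \<noteq> j" and k1: "\<forall>w\<in>Dset x y. (x w = i \<and> y w = j) \<or> (x w = j \<and> y w = i)"
    and k2: "conn E (Dset x y)"
    and k3: "\<forall>w\<in>Dset x y. \<forall>z\<in>V. (w, z) \<in> E \<longrightarrow> (x z = i \<or> x z = j) \<longrightarrow> z \<in> Dset x y"
    using K unfolding kedge_def by blast+
  have c1: "\<forall>w\<in>Dset y x. (y w = i \<and> x w = j) \<or> (y w = j \<and> x w = i)"
    using k1 unfolding D by blast
  have c3: "\<forall>w\<in>Dset y x. \<forall>z\<in>V. (w, z) \<in> E \<longrightarrow> (y z = i \<or> y z = j) \<longrightarrow> z \<in> Dset y x"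
  proof (intro ballI impI)
    fix w z assume w: "w \<in> Dset y x" and z: "z \<in> V" and wz: "(w, z) \<in> E" and yz: "y z = i \<or> y z = j"
    show "z \<in> Dset y x"
    proof (cases "z \<in> Dset x y")
      case True then show ?thesis unfolding D .
    next
      case False
      then have "x z = y z" unfolding Dset_def by auto
      then have "x z = i \<or> x z = j" using yz by simp
      then have "z \<in> Dset x y" using k3 w z wz unfolding D by blast
      then show ?thesis unfolding D .
    qed
  qed
  have c2: "conn E (Dset y x)" unfolding D by (rule k2)
  show ?thesis unfolding kedge_def using ij c1 c2 c3 by blast
qed



lemma kedge_pair:
  assumes "kedge V E x y i j" "x w \<noteq> y w"
  shows "(x w = i \<and> y w = j) \<or> (x w = j \<and> y w = i)" "i \<noteq> j"
  using assms unfolding kedge_def Dset_def by auto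

lemma kedge_conn: "kedge V E x y i j \<Longrightarrow> conn E (Dset x y)"
  unfolding kedge_def by blast

lemma kedge_closed:
  "kedge V E x y i j \<Longrightarrow> w \<in> Dset x y \<Longrightarrow> z \<in> V \<Longrightarrow> (w, z) \<in> E \<Longrightarrow> x z = i \<or> x z = j \<Longrightarrow> z \<in> Dset x y"
  unfolding kedge_def by blast

lemma connD:
  assumes "conn E D" "a \<in> D" "b \<in> D" "P a" "\<not> P b"
  shows "\<exists>p q. p \<in> D \<and> q \<in> D \<and> (p, q) \<in> E \<and> P p \<and> \<not> P q"
  using assms unfolding conn_def by blast

lemma edge_claim:
  assumes K1: "kedge V E c d i j" and a: "a \<in> Dset c d" and b: "b \<in> Dset c d"
    and K2: "kedge V E c e i2 j2" and K3: "kedge V E d e i3 j3"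
    and eab: "e a \<noteq> e b" and cab: "c a \<noteq> c b"
  shows "(e a = c a \<and> e b = c b) \<or> (e a = d a \<and> e b = d b)"
proof -
  have ha: "(c a = i \<and> d a = j) \<or> (c a = j \<and> d a = i)" and hb: "(c b = i \<and> d b = j) \<or> (c b = j \<and> d b = i)"
    and ij: "i \<noteq> j"
    using a b K1 kedge_pair[OF K1] unfolding Dset_def by auto
  have p2: "\<And>w. c w \<noteq> e w \<Longrightarrow> (c w = i2 \<and> e w = j2) \<or> (c w = j2 \<and> e w = i2)"
    using kedge_pair[OF K2] by blast
  have p3: "\<And>w. d w \<noteq> e w \<Longrightarrow> (d w = i3 \<and> e w = j3) \<or> (d w = j3 \<and> e w = i3)"
    using kedge_pair[OF K3] by blast
  have "i2 \<noteq> j2" "i3 \<noteq> j3" using K2 K3 unfolding kedge_def by auto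
  show ?thesis
    using p2[of a] p2[of b] p3[of a] p3[of b] ha hb ij eab cab \<open>i2 \<noteq> j2\<close> \<open>i3 \<noteq> j3\<close>
    by smt
qed

lemma crossing_false:
  assumes K: "kedge V E x y i j" and K2: "kedge V E x e i2 j2"
    and a1: "a \<in> Dset x y" and a2: "a \<in> Dset x e" and ea: "e a = y a"
    and z1: "z \<in> Dset x e" and z2: "z \<notin> Dset x y" and DV: "Dset x e \<subseteq> V"
  shows False
proof -
  obtain p q where pq: "p \<in> Dset x e" "q \<in> Dset x e" "(p, q) \<in> E" "p \<in> Dset x y" "q \<notin> Dset x y"
    using connD[OF kedge_conn[OF K2] a2 z1, of "\<lambda>w. w \<in> Dset x y"] a1 z2 by blast
  have ha: "(x a = i \<and> y a = j) \<or> (x a = j \<and> y a = i)" "i \<noteq> j"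
    using kedge_pair[OF K] a1 unfolding Dset_def by auto
  have hb: "(x a = i2 \<and> e a = j2) \<or> (x a = j2 \<and> e a = i2)"
    using kedge_pair[OF K2] a2 unfolding Dset_def by auto
  have hq: "(x q = i2 \<and> e q = j2) \<or> (x q = j2 \<and> e q = i2)"
    using kedge_pair[OF K2] pq(2) unfolding Dset_def by auto
  have "x q = i \<or> x q = j" using ha hb hq ea by auto
  then have "q \<in> Dset x y" using kedge_closed[OF K pq(4) _ pq(3)] DV pq(2) by blast
  then show False using pq(5) by blast
qed



lemma col_proper: "c \<in> colourings V E k \<Longrightarrow> (u, v) \<in> E \<Longrightarrow> c u \<noteq> c v"
  unfolding colourings_def by auto

lemma col_out: "c \<in> colourings V E k \<Longrightarrow> v \<notin> V \<Longrightarrow> c v = 0"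
  unfolding colourings_def by auto

lemma Dset_V:
  assumes c: "c \<in> colourings V E k" and d: "d \<in> colourings V E k'"
  shows "Dset c d \<subseteq> V"
proof
  fix x assume x: "x \<in> Dset c d"
  show "x \<in> V"
  proof (rule ccontr)
    assume xV: "x \<notin> V"
    have "c x = 0" by (rule col_out[OF c xV])
    moreover have "d x = 0" by (rule col_out[OF d xV])
    ultimately show False using x unfolding Dset_def by simp
  qed
qed

lemma tri_nontrivial:
  assumes c: "c \<in> colourings V E k" and d: "d \<in> colourings V E k" and e: "e \<in> colourings V E k"
    and K1: "kedge V E c d i j" and K2: "kedge V E c e i2 j2" and K3: "kedge V E d e i3 j3"
    and de: "d \<noteq> e" and ce: "c \<noteq> e"
    and a: "a \<in> Dset c d" and b: "b \<in> Dset c d" and ab: "a \<noteq> b"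
  shows False
proof -
  let ?D = "Dset c d"
  have nbr: "\<exists>q. q \<in> ?D \<and> (w, q) \<in> E" if w: "w \<in> ?D" for w
  proof -
    obtain w1 where o: "w1 \<in> ?D" "w1 \<noteq> w" using a b ab by blast
    show ?thesis using connD[OF kedge_conn[OF K1] w o(1), of "\<lambda>x. x = w"] o(2) by blast
  qed
  have claim: "(e p = c p \<and> e q = c q) \<or> (e p = d p \<and> e q = d q)"
    if "p \<in> ?D" "q \<in> ?D" "(p, q) \<in> E" for p q
    using edge_claim[OF K1 that(1,2) K2 K3] col_proper[OF e that(3)] col_proper[OF c that(3)] by blast
  show False
  proof (cases "\<exists>w0\<in>?D. e w0 = c w0")
    case False
    have eqd: "e w = d w" if wD: "w \<in> ?D" for w
    proof -
      obtain q where "q \<in> ?D" "(w, q) \<in> E" using nbr[OF wD] by blast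
      then have "(e w = c w \<and> e q = c q) \<or> (e w = d w \<and> e q = d q)" using claim[OF wD] by blast
      moreover have "e w \<noteq> c w" using False wD by blast
      ultimately show ?thesis by blast
    qed
    obtain z where z: "d z \<noteq> e z" using de by (auto simp: fun_eq_iff)
    have zD: "z \<notin> ?D"
    proof
      assume "z \<in> ?D"
      then have "e z = d z" by (rule eqd)
      then show False using z by simp
    qed
    have a2: "a \<in> Dset c e" using eqd[OF a] a unfolding Dset_def by auto
    have z1: "z \<in> Dset c e" using zD z unfolding Dset_def by auto
    show False using crossing_false[OF K1 K2 a a2 eqd[OF a] z1 zD Dset_V[OF c e]] .
  next
    case True
    then obtain w0 where w0: "w0 \<in> ?D" "e w0 = c w0" by blast
    have eqc: "e w = c w" if wD: "w \<in> ?D" for w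
    proof (rule ccontr)
      assume "e w \<noteq> c w"
      then obtain p q where pq: "p \<in> ?D" "q \<in> ?D" "(p, q) \<in> E" "e p = c p" "e q \<noteq> c q"
        using connD[OF kedge_conn[OF K1] w0(1) wD, of "\<lambda>x. e x = c x"] w0(2) by blast
      have "c p \<noteq> d p" using pq(1) unfolding Dset_def by auto
      then show False using claim[OF pq(1-3)] pq(4,5) by auto
    qed
    obtain z where z: "c z \<noteq> e z" using ce by (auto simp: fun_eq_iff)
    have zD: "z \<notin> ?D"
    proof
      assume "z \<in> ?D"
      then have "e z = c z" by (rule eqc)
      then show False using z by simp
    qed
    have K1': "kedge V E d c i j" using kedge_sym[OF K1] .
    have a1: "a \<in> Dset d c" using a by (auto simp: Dset_def)
    have a2: "a \<in> Dset d e" using eqc[OF a] a unfolding Dset_def by auto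
    have z1: "z \<in> Dset d e" using zD z unfolding Dset_def by auto
    have zD': "z \<notin> Dset d c" using zD by (auto simp: Dset_def)
    show False using crossing_false[OF K1' K3 a1 a2 eqc[OF a] z1 zD' Dset_V[OF d e]] .
  qed
qed



definition adjK :: "('c \<times> 'c) set \<Rightarrow> 'c \<Rightarrow> 'c \<Rightarrow> bool" where
  "adjK F x y \<longleftrightarrow> (x, y) \<in> F \<or> (y, x) \<in> F"

lemma kempe_edges_col:
  "(x, y) \<in> kempe_edges V E k \<Longrightarrow> x \<in> colourings V E k \<and> y \<in> colourings V E k \<and> x \<noteq> y"
  unfolding kempe_edges_def by blast

lemma adjK_col:
  assumes "adjK (kempe_edges V E k) x y"
  shows "x \<in> colourings V E k" "y \<in> colourings V E k" "x \<noteq> y"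
  using assms kempe_edges_col[of x y V E k] kempe_edges_col[of y x V E k] unfolding adjK_def by blast+

lemma adjK_kedge:
  assumes G: "simple_graph V E" and A: "adjK (kempe_edges V E k) x y"
  shows "\<exists>i j. kedge V E x y i j"
proof (cases "(x, y) \<in> kempe_edges V E k")
  case True
  then show ?thesis using kedge_of_kempe[OF G] by blast
next
  case False
  then have "(y, x) \<in> kempe_edges V E k" using A unfolding adjK_def by blast
  then obtain i j where "kedge V E y x i j" using kedge_of_kempe[OF G] by blast
  then show ?thesis using kedge_sym by blast
qed

lemma triangle:
  assumes G: "simple_graph V E"
    and cd: "adjK (kempe_edges V E k) c d" and ce: "adjK (kempe_edges V E k) c e"
    and de: "adjK (kempe_edges V E k) d e"
  shows "\<exists>v. \<forall>w. w \<noteq> v \<longrightarrow> d w = c w \<and> e w = c w"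
proof -
  have c: "c \<in> colourings V E k" and d: "d \<in> colourings V E k" and e: "e \<in> colourings V E k"
    and ncd: "c \<noteq> d" and nce: "c \<noteq> e" and nde: "d \<noteq> e"
    using adjK_col[OF cd] adjK_col[OF ce] adjK_col[OF de] by auto
  obtain i1 j1 where K1: "kedge V E c d i1 j1" using adjK_kedge[OF G cd] by blast
  obtain i2 j2 where K2: "kedge V E c e i2 j2" using adjK_kedge[OF G ce] by blast
  obtain i3 j3 where K3: "kedge V E d e i3 j3" using adjK_kedge[OF G de] by blast
  have K1': "kedge V E d c i1 j1" using kedge_sym[OF K1] .
  have K2': "kedge V E e c i2 j2" using kedge_sym[OF K2] .
  have K3': "kedge V E e d i3 j3" using kedge_sym[OF K3] .
  have S1: "a = b" if "a \<in> Dset c d" "b \<in> Dset c d" for a b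
    using tri_nontrivial[OF c d e K1 K2 K3 nde nce that] by blast
  have S2: "a = b" if "a \<in> Dset c e" "b \<in> Dset c e" for a b
    using tri_nontrivial[OF c e d K2 K1 K3' nde[symmetric] ncd that] by blast
  have S3: "a = b" if "a \<in> Dset d e" "b \<in> Dset d e" for a b
    using tri_nontrivial[OF d e c K3 K1' K2' nce[symmetric] ncd[symmetric] that] by blast
  obtain a1 where a1: "c a1 \<noteq> d a1" using ncd by (auto simp: fun_eq_iff)
  obtain a2 where a2: "c a2 \<noteq> e a2" using nce by (auto simp: fun_eq_iff)
  have a12: "a1 = a2"
  proof (rule ccontr)
    assume ne: "a1 \<noteq> a2"
    have "a2 \<notin> Dset c d" using S1[of a1 a2] a1 ne unfolding Dset_def by auto
    then have "d a2 = c a2" unfolding Dset_def by auto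
    then have m2: "a2 \<in> Dset d e" using a2 unfolding Dset_def by auto
    have "a1 \<notin> Dset c e" using S2[of a1 a2] a2 ne unfolding Dset_def by auto
    then have "e a1 = c a1" unfolding Dset_def by auto
    then have m1: "a1 \<in> Dset d e" using a1 unfolding Dset_def by auto
    show False using S3[OF m1 m2] ne by blast
  qed
  show ?thesis
  proof (intro exI allI impI)
    fix w assume w: "w \<noteq> a1"
    have "w \<notin> Dset c d" using S1[of a1 w] a1 w unfolding Dset_def by auto
    moreover have "w \<notin> Dset c e" using S2[of a2 w] a2 w a12 unfolding Dset_def by auto
    ultimately show "d w = c w \<and> e w = c w" unfolding Dset_def by auto
  qed
qed

definition diff_at :: "('a \<Rightarrow> nat) \<Rightarrow> ('a \<Rightarrow> nat) \<Rightarrow> 'a \<Rightarrow> bool" where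
  "diff_at x y v \<longleftrightarrow> x v \<noteq> y v \<and> (\<forall>w. w \<noteq> v \<longrightarrow> x w = y w)"

lemma single_edge:
  assumes G: "simple_graph V E" and x: "x \<in> colourings V E k" and y: "y \<in> colourings V E k"
    and D: "diff_at x y v"
  shows "(x, y) \<in> kempe_edges V E k"
proof -
  have xv: "x v \<noteq> y v" and oth: "\<And>w. w \<noteq> v \<Longrightarrow> x w = y w" using D unfolding diff_at_def by auto
  have vV: "v \<in> V"
  proof (rule ccontr)
    assume nv: "v \<notin> V"
    have "x v = 0" by (rule col_out[OF x nv])
    moreover have "y v = 0" by (rule col_out[OF y nv])
    ultimately show False using xv by simp
  qed
  have rng: "x v \<in> {1..k}" "y v \<in> {1..k}" using x y vV unfolding colourings_def by auto
  define i where "i = x v"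
  define j where "j = y v"
  define S where "S = {w\<in>V. x w = i \<or> x w = j}"
  have symE: "sym E" and irr: "\<And>w. (w, w) \<notin> E" using G unfolding simple_graph_def by auto
  have noR: "\<And>w. (v, w) \<in> E \<inter> S \<times> S \<Longrightarrow> False"
  proof -
    fix w assume "(v, w) \<in> E \<inter> S \<times> S"
    then have vw: "(v, w) \<in> E" and wS: "w \<in> S" by auto
    have wv: "w \<noteq> v" using vw irr by blast
    have "x w \<noteq> x v" using col_proper[OF x vw] by simp
    moreover have "y w \<noteq> y v" using col_proper[OF y vw] by simp
    then have "x w \<noteq> y v" using oth[OF wv] by simp
    ultimately show False using wS unfolding S_def i_def j_def by auto
  qed
  have Hs: "{v} = {w\<in>S. (v, w) \<in> (E \<inter> (S \<times> S))\<^sup>*}"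
  proof
    show "{v} \<subseteq> {w\<in>S. (v, w) \<in> (E \<inter> (S \<times> S))\<^sup>*}" using vV unfolding S_def i_def by auto
  next
    show "{w\<in>S. (v, w) \<in> (E \<inter> (S \<times> S))\<^sup>*} \<subseteq> {v}"
    proof
      fix w assume "w \<in> {w\<in>S. (v, w) \<in> (E \<inter> (S \<times> S))\<^sup>*}"
      then have "(v, w) \<in> (E \<inter> (S \<times> S))\<^sup>*" by simp
      then show "w \<in> {v}"
      proof (cases rule: converse_rtranclE)
        case base
        then show ?thesis by simp
      next
        case (step y)
        then have "(v, y) \<in> E \<inter> S \<times> S" by blast
        then show ?thesis using noR by blast
      qed
    qed
  qed
  have vS: "v \<in> S" using vV unfolding S_def i_def by auto
  have comp: "kempe_component V E x i j {v}"
    unfolding kempe_component_def Let_def S_def[symmetric] using vS Hs by blast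
  have sw: "y = kempe_swap x i j {v}"
  proof
    fix w show "y w = kempe_swap x i j {v} w"
      unfolding kempe_swap_def i_def j_def using oth[of w] by (cases "w = v") auto
  qed
  have "x \<noteq> y" using xv by auto
  moreover have "i \<noteq> j" using xv unfolding i_def j_def .
  ultimately show ?thesis unfolding kempe_edges_def using x y rng comp sw
    unfolding i_def j_def by blast
qed

lemma single_adj:
  assumes G: "simple_graph V E" and x: "x \<in> colourings V E k" and y: "y \<in> colourings V E k"
    and D: "diff_at x y v"
  shows "adjK (kempe_edges V E k) x y"
  using single_edge[OF assms] unfolding adjK_def by blast



definition clsK :: "('c \<times> 'c) set \<Rightarrow> 'c \<Rightarrow> 'c \<Rightarrow> 'c set" where
  "clsK F c d = insert d {e. adjK F c e \<and> adjK F d e}"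

definition XsK :: "('c \<times> 'c) set \<Rightarrow> 'c \<Rightarrow> 'c set set" where
  "XsK F c = {clsK F c d | d. adjK F c d \<and> (\<exists>e. adjK F c e \<and> adjK F d e)}"

definition triK :: "('c \<times> 'c) set \<Rightarrow> 'c \<Rightarrow> 'c \<Rightarrow> bool" where
  "triK F x y \<longleftrightarrow> (\<exists>z. adjK F x z \<and> adjK F y z)"

definition RedK :: "('c \<times> 'c) set \<Rightarrow> 'c \<Rightarrow> 'c set \<Rightarrow> 'c set \<Rightarrow> bool" where
  "RedK F c A B \<longleftrightarrow> A \<in> XsK F c \<and> B \<in> XsK F c \<and> A \<noteq> B \<and>
     (\<exists>d\<in>A. \<exists>e\<in>B. \<not> (\<exists>f. f \<noteq> c \<and> adjK F d f \<and> adjK F e f \<and> triK F d f \<and> triK F e f))"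

definition Qm :: "'a set \<Rightarrow> ('a \<times> 'a) set \<Rightarrow> nat \<Rightarrow> ('a \<Rightarrow> nat) \<Rightarrow> 'a \<Rightarrow> ('a \<Rightarrow> nat) set" where
  "Qm V E k c v = {d \<in> colourings V E k. diff_at c d v}"

lemma Qm_unique: "d \<in> Qm V E k c v \<Longrightarrow> d \<in> Qm V E k c v' \<Longrightarrow> v = v'"
  unfolding Qm_def diff_at_def by auto

lemma Qm_distinct_at:
  assumes "x \<in> Qm V E k c v" "y \<in> Qm V E k c v" "x \<noteq> y"
  shows "x v \<noteq> y v"
proof
  assume xy: "x v = y v"
  have "x w = y w" for w
    using assms(1,2) xy unfolding Qm_def diff_at_def by (cases "w = v") auto
  then show False using assms(3) by auto
qed

lemma cls_char:
  assumes G: "simple_graph V E"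
    and cd: "adjK (kempe_edges V E k) c d" and ce: "adjK (kempe_edges V E k) c e"
    and de: "adjK (kempe_edges V E k) d e"
  shows "\<exists>v. d \<in> Qm V E k c v \<and> clsK (kempe_edges V E k) c d = Qm V E k c v"
proof -
  let ?F = "kempe_edges V E k"
  obtain v where v: "\<And>w. w \<noteq> v \<Longrightarrow> d w = c w \<and> e w = c w" using triangle[OF G cd ce de] by blast
  have c: "c \<in> colourings V E k" and d: "d \<in> colourings V E k" and ncd: "c \<noteq> d"
    using adjK_col[OF cd] by auto
  have cv: "c v \<noteq> d v"
  proof
    assume "c v = d v"
    then have "c w = d w" for w using v[of w] by (cases "w = v") auto
    then show False using ncd by auto
  qed
  have dQ: "d \<in> Qm V E k c v" unfolding Qm_def diff_at_def using d cv v by auto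
  have "clsK ?F c d = Qm V E k c v"
  proof
    show "clsK ?F c d \<subseteq> Qm V E k c v"
    proof
      fix x assume "x \<in> clsK ?F c d"
      then have "x = d \<or> (adjK ?F c x \<and> adjK ?F d x)" unfolding clsK_def by blast
      then show "x \<in> Qm V E k c v"
      proof
        assume "x = d" then show ?thesis using dQ by simp
      next
        assume a: "adjK ?F c x \<and> adjK ?F d x"
        obtain v' where v': "\<And>w. w \<noteq> v' \<Longrightarrow> d w = c w \<and> x w = c w"
          using triangle[OF G cd, of x] a by blast
        have vv: "v' = v" using v'[of v] cv by auto
        have x: "x \<in> colourings V E k" and ncx: "c \<noteq> x" using adjK_col[of V E k c x] a by auto
        have "c v \<noteq> x v"
        proof
          assume "c v = x v"
          then have "c w = x w" for w using v'[of w] vv by (cases "w = v") auto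
          then show False using ncx by auto
        qed
        then show ?thesis unfolding Qm_def diff_at_def using x v' vv by auto
      qed
    qed
  next
    show "Qm V E k c v \<subseteq> clsK ?F c d"
    proof
      fix x assume xQ: "x \<in> Qm V E k c v"
      show "x \<in> clsK ?F c d"
      proof (cases "x = d")
        case True then show ?thesis unfolding clsK_def by simp
      next
        case False
        have x: "x \<in> colourings V E k" and dx: "diff_at c x v" using xQ unfolding Qm_def by auto
        have "adjK ?F c x" by (rule single_adj[OF G c x dx])
        moreover have "diff_at d x v"
          using Qm_distinct_at[OF dQ xQ] False dQ xQ unfolding Qm_def diff_at_def by auto
        then have "adjK ?F d x" by (rule single_adj[OF G d x])
        ultimately show ?thesis unfolding clsK_def by blast
      qed
    qed
  qed
  then show ?thesis using dQ by blast
qed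

lemma Xs_char:
  assumes G: "simple_graph V E" and A: "A \<in> XsK (kempe_edges V E k) c"
  shows "\<exists>v\<in>V. A = Qm V E k c v \<and> (\<exists>d e. d \<in> A \<and> e \<in> A \<and> d \<noteq> e)"
proof -
  let ?F = "kempe_edges V E k"
  obtain d e where A: "A = clsK ?F c d" and cd: "adjK ?F c d" and ce: "adjK ?F c e" and de: "adjK ?F d e"
    using A unfolding XsK_def by blast
  obtain v where dQ: "d \<in> Qm V E k c v" and Aq: "clsK ?F c d = Qm V E k c v"
    using cls_char[OF G cd ce de] by blast
  have c: "c \<in> colourings V E k" and d: "d \<in> colourings V E k" using adjK_col[OF cd] by auto
  have "v \<in> Dset c d" using dQ unfolding Qm_def diff_at_def Dset_def by auto
  then have vV: "v \<in> V" using Dset_V[OF c d] by blast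
  have "e \<in> A" "d \<in> A" using ce de unfolding A clsK_def by auto
  moreover have "d \<noteq> e" using adjK_col[OF de] by auto
  ultimately show ?thesis using vV A Aq by blast
qed



lemma build:
  assumes G: "simple_graph V E" and c: "c \<in> colourings V E k"
    and dQ: "d \<in> Qm V E k c u" and eQ: "e \<in> Qm V E k c v" and uv: "u \<noteq> v" and nE: "(u, v) \<notin> E"
  shows "d(v := e v) \<in> colourings V E k \<and> diff_at d (d(v := e v)) v \<and> diff_at e (d(v := e v)) u"
proof -
  have d: "d \<in> colourings V E k" and dd: "diff_at c d u" using dQ unfolding Qm_def by auto
  have e: "e \<in> colourings V E k" and ed: "diff_at c e v" using eQ unfolding Qm_def by auto
  have symE: "sym E" and irr: "\<And>w. (w, w) \<notin> E" using G unfolding simple_graph_def by auto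
  have nE': "(v, u) \<notin> E" using nE symE by (meson symD)
  let ?f = "d(v := e v)"
  have r1: "\<forall>w\<in>V. ?f w \<in> {1..k}"
  proof
    fix w assume "w \<in> V"
    then show "?f w \<in> {1..k}" using d e unfolding colourings_def by (cases "w = v") auto
  qed
  have r2: "\<forall>w. w \<notin> V \<longrightarrow> ?f w = 0"
  proof (intro allI impI)
    fix w assume "w \<notin> V"
    then show "?f w = 0" using col_out[OF d] col_out[OF e] by (cases "w = v") auto
  qed
  have r3: "\<forall>(a, b)\<in>E. ?f a \<noteq> ?f b"
  proof (clarify)
    fix a b assume ab: "(a, b) \<in> E" and eq: "?f a = ?f b"
    have anb: "a \<noteq> b" using ab irr by blast
    show False
    proof (cases "a = v")
      case True
      then have "b \<noteq> u" using ab nE' by blast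
      then have "d b = e b" using dd ed anb True unfolding diff_at_def by auto
      then show False using eq True anb col_proper[OF e ab] by auto
    next
      case False
      show False
      proof (cases "b = v")
        case True
        then have "a \<noteq> u" using ab nE by blast
        then have "d a = e a" using dd ed anb True unfolding diff_at_def by auto
        then show False using eq True anb col_proper[OF e ab] by auto
      next
        case False2: False
        then show False using eq False col_proper[OF d ab] by auto
      qed
    qed
  qed
  have f: "?f \<in> colourings V E k" unfolding colourings_def using r1 r2 r3 by blast
  have "diff_at d ?f v" using dd ed uv unfolding diff_at_def by auto
  moreover have "diff_at e ?f u" using dd ed uv unfolding diff_at_def by auto
  ultimately show ?thesis using f by blast
qed

lemma Red_edge:
  assumes G: "simple_graph V E" and c: "c \<in> colourings V E k"
    and R: "RedK (kempe_edges V E k) c A B"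
    and Au: "A = Qm V E k c u" and Bv: "B = Qm V E k c v"
  shows "(u, v) \<in> E"
proof (rule ccontr)
  assume nE: "(u, v) \<notin> E"
  let ?F = "kempe_edges V E k"
  have AX: "A \<in> XsK ?F c" and BX: "B \<in> XsK ?F c" and AB: "A \<noteq> B" using R unfolding RedK_def by auto
  obtain d e where dA: "d \<in> A" and eB: "e \<in> B"
    and nf: "\<not> (\<exists>f. f \<noteq> c \<and> adjK ?F d f \<and> adjK ?F e f \<and> triK ?F d f \<and> triK ?F e f)"
    using R unfolding RedK_def by blast
  have uv: "u \<noteq> v" using AB Au Bv by blast
  obtain d' where d'A: "d' \<in> A" and dd': "d' \<noteq> d"
  proof -
    obtain x y where "x \<in> A" "y \<in> A" "x \<noteq> y" using Xs_char[OF G AX] by blast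
    then show ?thesis using that by (cases "x = d") auto
  qed
  obtain e' where e'B: "e' \<in> B" and ee': "e' \<noteq> e"
  proof -
    obtain x y where "x \<in> B" "y \<in> B" "x \<noteq> y" using Xs_char[OF G BX] by blast
    then show ?thesis using that by (cases "x = e") auto
  qed
  have dQ: "d \<in> Qm V E k c u" and d'Q: "d' \<in> Qm V E k c u" using dA d'A Au by auto
  have eQ: "e \<in> Qm V E k c v" and e'Q: "e' \<in> Qm V E k c v" using eB e'B Bv by auto
  define f where "f = d(v := e v)"
  define z where "z = d(v := e' v)"
  define z' where "z' = d'(v := e v)"
  have bf: "f \<in> colourings V E k" "diff_at d f v" "diff_at e f u"
    using build[OF G c dQ eQ uv nE] unfolding f_def by auto
  have bz: "z \<in> colourings V E k" "diff_at d z v"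
    using build[OF G c dQ e'Q uv nE] unfolding z_def by auto
  have bz': "z' \<in> colourings V E k" "diff_at e z' u"
    using build[OF G c d'Q eQ uv nE] unfolding z'_def by auto
  have d: "d \<in> colourings V E k" and e: "e \<in> colourings V E k" using dQ eQ unfolding Qm_def by auto
  have du: "d u \<noteq> c u" and dv: "d v = c v" using dQ uv unfolding Qm_def diff_at_def by auto
  have "f u = d u" using uv unfolding f_def by simp
  then have fc: "f \<noteq> c" using du by auto
  have a1: "adjK ?F d f" by (rule single_adj[OF G d bf(1) bf(2)])
  have a2: "adjK ?F e f" by (rule single_adj[OF G e bf(1) bf(3)])
  have "e v \<noteq> e' v" using Qm_distinct_at[OF eQ e'Q] ee' by auto
  then have "diff_at f z v" unfolding f_def z_def diff_at_def by auto
  then have "adjK ?F f z" by (rule single_adj[OF G bf(1) bz(1)])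
  moreover have "adjK ?F d z" by (rule single_adj[OF G d bz(1) bz(2)])
  ultimately have t1: "triK ?F d f" unfolding triK_def adjK_def by blast
  have "d u \<noteq> d' u" using Qm_distinct_at[OF dQ d'Q] dd' by auto
  moreover have "d w = d' w" if "w \<noteq> u" for w using dQ d'Q that unfolding Qm_def diff_at_def by auto
  ultimately have "diff_at f z' u" unfolding f_def z'_def diff_at_def using uv by auto
  then have "adjK ?F f z'" by (rule single_adj[OF G bf(1) bz'(1)])
  moreover have "adjK ?F e z'" by (rule single_adj[OF G e bz'(1) bz'(2)])
  ultimately have t2: "triK ?F e f" unfolding triK_def adjK_def by blast
  show False using nf fc a1 a2 t1 t2 by blast
qed



lemma good_colouring:
  assumes G: "simple_graph V E" and k: "k > chromatic_number V E + 1"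
  shows "\<exists>c a b. c \<in> colourings V E k \<and> a \<noteq> b \<and> a \<in> {1..k} \<and> b \<in> {1..k} \<and> (\<forall>w. c w \<noteq> a \<and> c w \<noteq> b)"
proof -
  have fin: "finite V" and irr: "\<And>w. (w, w) \<notin> E" and EV: "E \<subseteq> V \<times> V"
    using G unfolding simple_graph_def by auto
  obtain h where h: "bij_betw h V {0..<card V}" using ex_bij_betw_finite_nat[OF fin] by blast
  define c1 where "c1 = (\<lambda>w. if w \<in> V then h w + 1 else 0)"
  have "c1 \<in> colourings V E (card V)"
    unfolding colourings_def
  proof (intro CollectI conjI allI ballI impI)
    fix v assume "v \<in> V"
    then have "h v \<in> {0..<card V}" using h unfolding bij_betw_def by blast
    then show "c1 v \<in> {1..card V}" using \<open>v \<in> V\<close> unfolding c1_def by auto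
  next
    fix v assume "v \<notin> V" then show "c1 v = 0" unfolding c1_def by simp
  next
    fix x assume x: "x \<in> E"
    obtain u v where uv: "x = (u, v)" by (cases x)
    have "u \<in> V" "v \<in> V" "u \<noteq> v" using x uv EV irr by auto
    then have "h u \<noteq> h v" using h unfolding bij_betw_def inj_on_def by blast
    then show "case x of (u, v) \<Rightarrow> c1 u \<noteq> c1 v" using uv \<open>u \<in> V\<close> \<open>v \<in> V\<close> unfolding c1_def by simp
  qed
  then have ne: "colourings V E (card V) \<noteq> {}" by blast
  have "colourings V E (chromatic_number V E) \<noteq> {}"
    unfolding chromatic_number_def by (rule LeastI[of "\<lambda>k. colourings V E k \<noteq> {}", OF ne])
  then obtain c where c: "c \<in> colourings V E (chromatic_number V E)" by blast
  have cle: "\<And>w. c w \<le> chromatic_number V E"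
  proof -
    fix w show "c w \<le> chromatic_number V E"
      using c unfolding colourings_def by (cases "w \<in> V") auto
  qed
  have ck: "c \<in> colourings V E k" using c k unfolding colourings_def by auto
  have "\<forall>w. c w \<noteq> k \<and> c w \<noteq> k - 1"
  proof
    fix w show "c w \<noteq> k \<and> c w \<noteq> k - 1" using cle[of w] k by auto
  qed
  moreover have "k \<noteq> k - 1" "k \<in> {1..k}" "k - 1 \<in> {1..k}" using k by auto
  ultimately show ?thesis using ck by blast
qed

lemma upd_col:
  assumes G: "simple_graph V E" and c: "c \<in> colourings V E k" and v: "v \<in> V"
    and a: "a \<in> {1..k}" and free: "\<forall>w. c w \<noteq> a"
  shows "c(v := a) \<in> colourings V E k \<and> diff_at c (c(v := a)) v"
proof -
  have irr: "\<And>w. (w, w) \<notin> E" using G unfolding simple_graph_def by auto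
  have "c(v := a) \<in> colourings V E k"
    unfolding colourings_def
  proof (intro CollectI conjI allI ballI impI)
    fix w assume "w \<in> V" then show "(c(v := a)) w \<in> {1..k}" using c a unfolding colourings_def by auto
  next
    fix w assume "w \<notin> V" then show "(c(v := a)) w = 0" using v col_out[OF c] by auto
  next
    fix x assume x: "x \<in> E"
    obtain p q where pq: "x = (p, q)" by (cases x)
    have "p \<noteq> q" using x pq irr by auto
    then show "case x of (p, q) \<Rightarrow> (c(v := a)) p \<noteq> (c(v := a)) q"
      using pq col_proper[OF c, of p q] x free by auto
  qed
  moreover have "diff_at c (c(v := a)) v" using free unfolding diff_at_def by auto
  ultimately show ?thesis by blast
qed

lemma good_beta:
  assumes G: "simple_graph V E" and c: "c \<in> colourings V E k"
    and ab: "a \<noteq> b" "a \<in> {1..k}" "b \<in> {1..k}" and free: "\<forall>w. c w \<noteq> a \<and> c w \<noteq> b"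
  shows "\<And>v. v \<in> V \<Longrightarrow> Qm V E k c v \<in> XsK (kempe_edges V E k) c"
    and "inj_on (Qm V E k c) V"
    and "\<And>u v. u \<in> V \<Longrightarrow> v \<in> V \<Longrightarrow> (u, v) \<in> E \<Longrightarrow> RedK (kempe_edges V E k) c (Qm V E k c u) (Qm V E k c v)"
proof -
  let ?F = "kempe_edges V E k"
  have fa: "\<forall>w. c w \<noteq> a" and fb: "\<forall>w. c w \<noteq> b" using free by auto
  have inQ: "c(v := a) \<in> Qm V E k c v" if "v \<in> V" for v
    using upd_col[OF G c that ab(2) fa] unfolding Qm_def by auto
  have XS: "Qm V E k c v \<in> XsK ?F c" if v: "v \<in> V" for v
  proof -
    obtain ca: "c(v := a) \<in> colourings V E k" "diff_at c (c(v := a)) v" using upd_col[OF G c v ab(2) fa] by blast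
    obtain cb: "c(v := b) \<in> colourings V E k" "diff_at c (c(v := b)) v" using upd_col[OF G c v ab(3) fb] by blast
    have a1: "adjK ?F c (c(v := a))" by (rule single_adj[OF G c ca])
    have a2: "adjK ?F c (c(v := b))" by (rule single_adj[OF G c cb])
    have "diff_at (c(v := a)) (c(v := b)) v" using ab(1) unfolding diff_at_def by auto
    then have a3: "adjK ?F (c(v := a)) (c(v := b))" by (rule single_adj[OF G ca(1) cb(1)])
    obtain v' where v': "c(v := a) \<in> Qm V E k c v'" "clsK ?F c (c(v := a)) = Qm V E k c v'"
      using cls_char[OF G a1 a2 a3] by blast
    have "v' = v" using Qm_unique[OF v'(1) inQ[OF v]] .
    moreover have "clsK ?F c (c(v := a)) \<in> XsK ?F c" unfolding XsK_def using a1 a2 a3 by blast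
    ultimately show ?thesis using v'(2) by simp
  qed
  then show "\<And>v. v \<in> V \<Longrightarrow> Qm V E k c v \<in> XsK ?F c" by blast
  show "inj_on (Qm V E k c) V"
  proof (rule inj_onI)
    fix u v assume u: "u \<in> V" and v: "v \<in> V" and eq: "Qm V E k c u = Qm V E k c v"
    have "c(u := a) \<in> Qm V E k c v" using inQ[OF u] eq by simp
    then show "u = v" using Qm_unique[OF inQ[OF u]] by blast
  qed
  fix u v assume u: "u \<in> V" and v: "v \<in> V" and uv: "(u, v) \<in> E"
  have irr: "\<And>w. (w, w) \<notin> E" using G unfolding simple_graph_def by auto
  have neq: "u \<noteq> v" using uv irr by blast
  have ne: "Qm V E k c u \<noteq> Qm V E k c v"
  proof
    assume eq: "Qm V E k c u = Qm V E k c v"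
    have "c(u := a) \<in> Qm V E k c v" using inQ[OF u] eq by simp
    then show False using Qm_unique[OF inQ[OF u]] neq by blast
  qed
  define d where "d = c(u := a)"
  define e where "e = c(v := a)"
  have dQ: "d \<in> Qm V E k c u" using inQ[OF u] unfolding d_def .
  have eQ: "e \<in> Qm V E k c v" using inQ[OF v] unfolding e_def .
  have nf: "\<not> (\<exists>f. f \<noteq> c \<and> adjK ?F d f \<and> adjK ?F e f \<and> triK ?F d f \<and> triK ?F e f)"
  proof
    assume "\<exists>f. f \<noteq> c \<and> adjK ?F d f \<and> adjK ?F e f \<and> triK ?F d f \<and> triK ?F e f"
    then obtain f where fc: "f \<noteq> c" and adf: "adjK ?F d f" and aef: "adjK ?F e f"
      and tdf: "triK ?F d f" and tef: "triK ?F e f" by blast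
    obtain z1 where z1: "adjK ?F d z1" "adjK ?F f z1" using tdf unfolding triK_def by blast
    obtain z2 where z2: "adjK ?F e z2" "adjK ?F f z2" using tef unfolding triK_def by blast
    obtain w1 where w1: "\<And>w. w \<noteq> w1 \<Longrightarrow> f w = d w"
      using triangle[OF G adf z1(1) z1(2)] by blast
    obtain w2 where w2: "\<And>w. w \<noteq> w2 \<Longrightarrow> f w = e w"
      using triangle[OF G aef z2(1) z2(2)] by blast
    have f: "f \<in> colourings V E k" using adjK_col[OF adf] by auto
    have du: "d u = a" "e u = c u" "d v = c v" "e v = a" using neq unfolding d_def e_def by auto
    have cu: "c u \<noteq> a" "c v \<noteq> a" using fa by auto
    have uin: "u = w1 \<or> u = w2"
    proof (rule ccontr)
      assume "\<not> (u = w1 \<or> u = w2)"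
      then have "f u = d u" "f u = e u" using w1[of u] w2[of u] by auto
      then show False using du cu by simp
    qed
    have vin: "v = w1 \<or> v = w2"
    proof (rule ccontr)
      assume "\<not> (v = w1 \<or> v = w2)"
      then have "f v = d v" "f v = e v" using w1[of v] w2[of v] by auto
      then show False using du cu by simp
    qed
    show False
    proof (cases "u = w1")
      case True
      then have "v = w2" using vin neq by auto
      have "f w = c w" for w
      proof (cases "w = u")
        case True then show ?thesis using w2[of w] neq \<open>v = w2\<close> du by auto
      next
        case False
        then show ?thesis using w1[of w] \<open>u = w1\<close> unfolding d_def by auto
      qed
      then show False using fc by auto
    next
      case False
      then have "u = w2" "v = w1" using uin vin neq by auto
      have "f u = a" using w1[of u] neq \<open>v = w1\<close> du by auto
      moreover have "f v = a" using w2[of v] neq \<open>u = w2\<close> du by auto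
      ultimately show False using col_proper[OF f uv] by simp
    qed
  qed
  show "RedK ?F c (Qm V E k c u) (Qm V E k c v)"
    unfolding RedK_def using XS[OF u] XS[OF v] ne dQ eQ nf by blast
qed



locale trans_iso =
  fixes W :: "'c set" and F :: "('c \<times> 'c) set" and W' :: "'d set" and F' :: "('d \<times> 'd) set"
    and \<Phi> :: "'c \<Rightarrow> 'd"
  assumes bij: "bij_betw \<Phi> W W'" and FW: "F \<subseteq> W \<times> W" and FW': "F' \<subseteq> W' \<times> W'"
    and iso: "\<And>x y. x \<in> W \<Longrightarrow> y \<in> W \<Longrightarrow> (x, y) \<in> F \<longleftrightarrow> (\<Phi> x, \<Phi> y) \<in> F'"
begin

lemma adjW: "adjK F x y \<Longrightarrow> x \<in> W \<and> y \<in> W"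
  using FW unfolding adjK_def by auto

lemma adjW': "adjK F' x y \<Longrightarrow> x \<in> W' \<and> y \<in> W'"
  using FW' unfolding adjK_def by auto

lemma surjW: "y' \<in> W' \<Longrightarrow> \<exists>y\<in>W. y' = \<Phi> y"
  using bij unfolding bij_betw_def by auto

lemma injW: "x \<in> W \<Longrightarrow> y \<in> W \<Longrightarrow> \<Phi> x = \<Phi> y \<Longrightarrow> x = y"
  using bij unfolding bij_betw_def inj_on_def by auto

lemma mapW: "x \<in> W \<Longrightarrow> \<Phi> x \<in> W'"
  using bij unfolding bij_betw_def by auto

lemma adj_iff: "x \<in> W \<Longrightarrow> y \<in> W \<Longrightarrow> adjK F' (\<Phi> x) (\<Phi> y) \<longleftrightarrow> adjK F x y"
  unfolding adjK_def using iso by auto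

lemma adj_ex: "x \<in> W \<Longrightarrow> adjK F' (\<Phi> x) y' \<Longrightarrow> \<exists>y\<in>W. y' = \<Phi> y \<and> adjK F x y"
  using adjW' surjW adj_iff by blast

lemma cls_map:
  assumes c: "c \<in> W" and d: "d \<in> W"
  shows "\<Phi> ` clsK F c d = clsK F' (\<Phi> c) (\<Phi> d)"
proof
  show "\<Phi> ` clsK F c d \<subseteq> clsK F' (\<Phi> c) (\<Phi> d)"
  proof
    fix x' assume "x' \<in> \<Phi> ` clsK F c d"
    then obtain x where x: "x \<in> clsK F c d" and x': "x' = \<Phi> x" by blast
    show "x' \<in> clsK F' (\<Phi> c) (\<Phi> d)"
    proof (cases "x = d")
      case True then show ?thesis using x' unfolding clsK_def by simp
    next
      case False
      then have a: "adjK F c x" "adjK F d x" using x unfolding clsK_def by auto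
      then have "x \<in> W" using adjW by blast
      then show ?thesis using a x' adj_iff c d unfolding clsK_def by blast
    qed
  qed
next
  show "clsK F' (\<Phi> c) (\<Phi> d) \<subseteq> \<Phi> ` clsK F c d"
  proof
    fix x' assume x': "x' \<in> clsK F' (\<Phi> c) (\<Phi> d)"
    show "x' \<in> \<Phi> ` clsK F c d"
    proof (cases "x' = \<Phi> d")
      case True then show ?thesis unfolding clsK_def by simp
    next
      case False
      then have a: "adjK F' (\<Phi> c) x'" "adjK F' (\<Phi> d) x'" using x' unfolding clsK_def by auto
      obtain x where x: "x \<in> W" "x' = \<Phi> x" using adjW' a(1) surjW by blast
      have "adjK F c x" "adjK F d x" using a x adj_iff c d by auto
      then show ?thesis using x unfolding clsK_def by blast
    qed
  qed
qed

lemma Xs_sub: "c \<in> W \<Longrightarrow> A \<in> XsK F c \<Longrightarrow> A \<subseteq> W"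
  unfolding XsK_def clsK_def using adjW by blast

lemma Xs_map:
  assumes c: "c \<in> W" and A: "A \<in> XsK F c"
  shows "\<Phi> ` A \<in> XsK F' (\<Phi> c)"
proof -
  obtain d e where Ad: "A = clsK F c d" and cd: "adjK F c d" and ce: "adjK F c e" and de: "adjK F d e"
    using A unfolding XsK_def by blast
  have dW: "d \<in> W" and eW: "e \<in> W" using adjW cd ce by blast+
  have "\<Phi> ` A = clsK F' (\<Phi> c) (\<Phi> d)" using cls_map[OF c dW] Ad by simp
  moreover have "adjK F' (\<Phi> c) (\<Phi> d)" "adjK F' (\<Phi> c) (\<Phi> e)" "adjK F' (\<Phi> d) (\<Phi> e)"
    using adj_iff c dW eW cd ce de by auto
  ultimately show ?thesis unfolding XsK_def by blast
qed

lemma tri_iff: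
  assumes x: "x \<in> W" and y: "y \<in> W"
  shows "triK F' (\<Phi> x) (\<Phi> y) \<longleftrightarrow> triK F x y"
proof
  assume "triK F' (\<Phi> x) (\<Phi> y)"
  then obtain z' where z': "adjK F' (\<Phi> x) z'" "adjK F' (\<Phi> y) z'" unfolding triK_def by blast
  obtain z where z: "z \<in> W" "z' = \<Phi> z" using adjW' z'(1) surjW by blast
  show "triK F x y" unfolding triK_def using z z' adj_iff x y by auto
next
  assume "triK F x y"
  then obtain z where z: "adjK F x z" "adjK F y z" unfolding triK_def by blast
  have "z \<in> W" using adjW z(1) by blast
  then show "triK F' (\<Phi> x) (\<Phi> y)" unfolding triK_def using z adj_iff x y by blast
qed

lemma Red_map:
  assumes c: "c \<in> W" and R: "RedK F c A B"
  shows "RedK F' (\<Phi> c) (\<Phi> ` A) (\<Phi> ` B)"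
proof -
  have AX: "A \<in> XsK F c" and BX: "B \<in> XsK F c" and AB: "A \<noteq> B" using R unfolding RedK_def by auto
  obtain d e where dA: "d \<in> A" and eB: "e \<in> B"
    and nf: "\<not> (\<exists>f. f \<noteq> c \<and> adjK F d f \<and> adjK F e f \<and> triK F d f \<and> triK F e f)"
    using R unfolding RedK_def by blast
  have AW: "A \<subseteq> W" and BW: "B \<subseteq> W" using Xs_sub[OF c] AX BX by auto
  have dW: "d \<in> W" and eW: "e \<in> W" using dA eB AW BW by auto
  have inj: "inj_on \<Phi> W" using bij unfolding bij_betw_def by auto
  have ne: "\<Phi> ` A \<noteq> \<Phi> ` B" using inj_on_image_eq_iff[OF inj AW BW] AB by blast
  have nf': "\<not> (\<exists>f'. f' \<noteq> \<Phi> c \<and> adjK F' (\<Phi> d) f' \<and> adjK F' (\<Phi> e) f' \<and> triK F' (\<Phi> d) f' \<and> triK F' (\<Phi> e) f')"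
  proof
    assume "\<exists>f'. f' \<noteq> \<Phi> c \<and> adjK F' (\<Phi> d) f' \<and> adjK F' (\<Phi> e) f' \<and> triK F' (\<Phi> d) f' \<and> triK F' (\<Phi> e) f'"
    then obtain f' where f': "f' \<noteq> \<Phi> c" "adjK F' (\<Phi> d) f'" "adjK F' (\<Phi> e) f'" "triK F' (\<Phi> d) f'" "triK F' (\<Phi> e) f'"
      by blast
    obtain f where f: "f \<in> W" "f' = \<Phi> f" using adjW' f'(2) surjW by blast
    have "f \<noteq> c" using f f'(1) by auto
    moreover have "adjK F d f" "adjK F e f" using f f'(2,3) adj_iff dW eW by auto
    moreover have "triK F d f" "triK F e f" using f f'(4,5) tri_iff dW eW by auto
    ultimately show False using nf by blast
  qed
  show ?thesis unfolding RedK_def using Xs_map[OF c AX] Xs_map[OF c BX] ne dA eB nf' by blast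
qed

end

definition embeds :: "'a set \<Rightarrow> ('a \<times> 'a) set \<Rightarrow> 'b set \<Rightarrow> ('b \<times> 'b) set \<Rightarrow> bool" where
  "embeds V E V' E' \<longleftrightarrow> (\<exists>g. (\<forall>v\<in>V. g v \<in> V') \<and> inj_on g V \<and> (\<forall>u\<in>V. \<forall>v\<in>V. (u, v) \<in> E \<longrightarrow> (g u, g v) \<in> E'))"

lemma kempe_edges_sub: "kempe_edges V E k \<subseteq> colourings V E k \<times> colourings V E k"
  unfolding kempe_edges_def by auto

lemma main_embed:
  assumes G: "simple_graph V E" and G': "simple_graph V' E'"
    and k: "k > chromatic_number V E + 1"
    and I: "graph_iso (colourings V E k) (kempe_edges V E k) (colourings V' E' k') (kempe_edges V' E' k')"
  shows "embeds V E V' E'"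
proof -
  let ?W = "colourings V E k" and ?F = "kempe_edges V E k"
  let ?W' = "colourings V' E' k'" and ?F' = "kempe_edges V' E' k'"
  obtain \<Phi> where bij: "bij_betw \<Phi> ?W ?W'" and iso: "\<forall>x\<in>?W. \<forall>y\<in>?W. (x, y) \<in> ?F \<longleftrightarrow> (\<Phi> x, \<Phi> y) \<in> ?F'"
    using I unfolding graph_iso_def by blast
  interpret T: trans_iso ?W ?F ?W' ?F' \<Phi>
  proof
    show "bij_betw \<Phi> ?W ?W'" by (rule bij)
    show "?F \<subseteq> ?W \<times> ?W" by (rule kempe_edges_sub)
    show "?F' \<subseteq> ?W' \<times> ?W'" by (rule kempe_edges_sub)
    fix x y assume "x \<in> ?W" "y \<in> ?W"
    then show "(x, y) \<in> ?F \<longleftrightarrow> (\<Phi> x, \<Phi> y) \<in> ?F'" using iso by blast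
  qed
  obtain c a b where c: "c \<in> ?W" and ab: "a \<noteq> b" "a \<in> {1..k}" "b \<in> {1..k}" and free: "\<forall>w. c w \<noteq> a \<and> c w \<noteq> b"
    using good_colouring[OF G k] by blast
  note gb = good_beta[OF G c ab free]
  define c' where "c' = \<Phi> c"
  have c': "c' \<in> ?W'" using T.mapW[OF c] unfolding c'_def .
  define g where "g = (\<lambda>v. SOME v'. v' \<in> V' \<and> \<Phi> ` Qm V E k c v = Qm V' E' k' c' v')"
  have gp: "g v \<in> V' \<and> \<Phi> ` Qm V E k c v = Qm V' E' k' c' (g v)" if v: "v \<in> V" for v
  proof -
    have "\<Phi> ` Qm V E k c v \<in> XsK ?F' c'" using T.Xs_map[OF c gb(1)[OF v]] unfolding c'_def .
    then have "\<exists>v'. v' \<in> V' \<and> \<Phi> ` Qm V E k c v = Qm V' E' k' c' v'" using Xs_char[OF G'] by blast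
    then show ?thesis unfolding g_def by (rule someI_ex)
  qed
  have inj: "inj_on g V"
  proof (rule inj_onI)
    fix u v assume u: "u \<in> V" and v: "v \<in> V" and eq: "g u = g v"
    have "\<Phi> ` Qm V E k c u = \<Phi> ` Qm V E k c v" using gp[OF u] gp[OF v] eq by simp
    moreover have "Qm V E k c u \<subseteq> ?W" "Qm V E k c v \<subseteq> ?W" unfolding Qm_def by auto
    moreover have "inj_on \<Phi> ?W" using bij unfolding bij_betw_def by auto
    ultimately have "Qm V E k c u = Qm V E k c v" using inj_on_image_eq_iff by metis
    then show "u = v" using gb(2) u v unfolding inj_on_def by blast
  qed
  have edges: "(g u, g v) \<in> E'" if u: "u \<in> V" and v: "v \<in> V" and uv: "(u, v) \<in> E" for u v
  proof -
    have "RedK ?F c (Qm V E k c u) (Qm V E k c v)" using gb(3)[OF u v uv] .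
    then have "RedK ?F' c' (\<Phi> ` Qm V E k c u) (\<Phi> ` Qm V E k c v)" using T.Red_map[OF c] unfolding c'_def by blast
    then have "RedK ?F' c' (Qm V' E' k' c' (g u)) (Qm V' E' k' c' (g v))" using gp[OF u] gp[OF v] by simp
    then show ?thesis using Red_edge[OF G' c'] by blast
  qed
  show ?thesis unfolding embeds_def using gp inj edges by blast
qed

lemma graph_iso_sym:
  assumes "graph_iso W F W' F'"
  shows "graph_iso W' F' W F"
proof -
  obtain \<Phi> where bij: "bij_betw \<Phi> W W'" and iso: "\<forall>x\<in>W. \<forall>y\<in>W. (x, y) \<in> F \<longleftrightarrow> (\<Phi> x, \<Phi> y) \<in> F'"
    using assms unfolding graph_iso_def by blast
  define \<Psi> where "\<Psi> = inv_into W \<Phi>"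
  have bij': "bij_betw \<Psi> W' W" unfolding \<Psi>_def by (rule bij_betw_inv_into[OF bij])
  have "\<forall>x\<in>W'. \<forall>y\<in>W'. (x, y) \<in> F' \<longleftrightarrow> (\<Psi> x, \<Psi> y) \<in> F"
  proof (intro ballI)
    fix x y assume x: "x \<in> W'" and y: "y \<in> W'"
    have "\<Psi> x \<in> W" "\<Psi> y \<in> W" using bij' x y unfolding bij_betw_def by auto
    moreover have "\<Phi> (\<Psi> x) = x" "\<Phi> (\<Psi> y) = y"
      using x y bij unfolding \<Psi>_def by (auto simp: bij_betw_inv_into_right)
    ultimately show "(x, y) \<in> F' \<longleftrightarrow> (\<Psi> x, \<Psi> y) \<in> F" using iso by metis
  qed
  then show ?thesis unfolding graph_iso_def using bij' by blast
qed

lemma mutual_embeds: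
  assumes G: "simple_graph V E" and G': "simple_graph V' E'"
    and e1: "embeds V E V' E'" and e2: "embeds V' E' V E"
  shows "graph_iso V E V' E'"
proof -
  obtain g where g1: "\<forall>v\<in>V. g v \<in> V'" and g2: "inj_on g V" and g3: "\<forall>u\<in>V. \<forall>v\<in>V. (u, v) \<in> E \<longrightarrow> (g u, g v) \<in> E'"
    using e1 unfolding embeds_def by blast
  obtain h where h1: "\<forall>v\<in>V'. h v \<in> V" and h2: "inj_on h V'" and h3: "\<forall>u\<in>V'. \<forall>v\<in>V'. (u, v) \<in> E' \<longrightarrow> (h u, h v) \<in> E"
    using e2 unfolding embeds_def by blast
  have fV: "finite V" and EV: "E \<subseteq> V \<times> V" using G unfolding simple_graph_def by auto
  have fV': "finite V'" and EV': "E' \<subseteq> V' \<times> V'" using G' unfolding simple_graph_def by auto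
  have fE: "finite E" using EV fV by (meson finite_SigmaI rev_finite_subset)
  have fE': "finite E'" using EV' fV' by (meson finite_SigmaI rev_finite_subset)
  have gV: "g ` V \<subseteq> V'" using g1 by auto
  have hV: "h ` V' \<subseteq> V" using h1 by auto
  have c1: "card V \<le> card V'" using card_inj_on_le[OF g2 gV fV'] .
  have c2: "card V' \<le> card V" using card_inj_on_le[OF h2 hV fV] .
  have "card (g ` V) = card V'" using card_image[OF g2] c1 c2 by simp
  then have gim: "g ` V = V'" using card_subset_eq[OF fV' gV] by blast
  have bij: "bij_betw g V V'" unfolding bij_betw_def using g2 gim by blast
  define pg where "pg = (\<lambda>(u, v). (g u, g v))"
  define ph where "ph = (\<lambda>(u, v). (h u, h v))"
  have pgi: "inj_on pg E"
    using g2 EV unfolding pg_def inj_on_def by auto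
  have phi: "inj_on ph E'"
    using h2 EV' unfolding ph_def inj_on_def by auto
  have pgE: "pg ` E \<subseteq> E'" using g3 EV unfolding pg_def by auto
  have phE: "ph ` E' \<subseteq> E" using h3 EV' unfolding ph_def by auto
  have "card E \<le> card E'" using card_inj_on_le[OF pgi pgE fE'] .
  moreover have "card E' \<le> card E" using card_inj_on_le[OF phi phE fE] .
  ultimately have "card (pg ` E) = card E'" using card_image[OF pgi] by simp
  then have pgim: "pg ` E = E'" using card_subset_eq[OF fE' pgE] by blast
  have "\<forall>u\<in>V. \<forall>v\<in>V. (u, v) \<in> E \<longleftrightarrow> (g u, g v) \<in> E'"
  proof (intro ballI iffI)
    fix u v assume "u \<in> V" "v \<in> V" "(u, v) \<in> E" then show "(g u, g v) \<in> E'" using g3 by blast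
  next
    fix u v assume u: "u \<in> V" and v: "v \<in> V" and e: "(g u, g v) \<in> E'"
    then obtain p q where pq: "(p, q) \<in> E" "pg (p, q) = (g u, g v)" using pgim by force
    have "p \<in> V" "q \<in> V" using pq(1) EV by auto
    moreover have "g p = g u" "g q = g v" using pq(2) unfolding pg_def by auto
    ultimately have "p = u" "q = v" using g2 u v unfolding inj_on_def by auto
    then show "(u, v) \<in> E" using pq(1) by simp
  qed
  then show ?thesis unfolding graph_iso_def using bij by blast
qed

theorem theorem1p5:
  fixes V :: "'a set" and E :: "('a \<times> 'a) set"
    and V' :: "'b set" and E' :: "('b \<times> 'b) set"
    and k k' :: nat
  assumes "simple_graph V E" and "simple_graph V' E'"
    and "k > chromatic_number V E + 1"
    and "k' > chromatic_number V' E' + 1"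
    and "graph_iso (colourings V E k) (kempe_edges V E k) (colourings V' E' k') (kempe_edges V' E' k')"
  shows "graph_iso V E V' E'"
proof -
  have e1: "embeds V E V' E'" using main_embed[OF assms(1,2,3,5)] .
  have "graph_iso (colourings V' E' k') (kempe_edges V' E' k') (colourings V E k) (kempe_edges V E k)"
    using graph_iso_sym[OF assms(5)] .
  then have e2: "embeds V' E' V E" using main_embed[OF assms(2,1,4)] by blast
  show ?thesis using mutual_embeds[OF assms(1,2) e1 e2] .
qed


end
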